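(* Let $\Gamma=(G,\sigma)$ be a connected signed graph on $n$ vertices, let $M$ be any real symmetric $n\times n$ matrix compatible with $\Gamma$, let $\lambda_n$ be the largest eigenvalue of $M$, and let $f_n$ be an eigenfunction of $M$ for $\lambda_n$. Then $\Gamma$ is antibalanced if and only if $\mathfrak{W}(f_n)=\mathfrak{S}(f_n)=n$. Moreover, when $\Gamma$ is antibalanced, $\lambda_n$ is simple.
   Context: Graphs are finite, simple, undirected. A signed graph $\Gamma=(G,\sigma)$ is a graph $G=(V,E)$ with $\sigma:E\to\{+1,-1\}$. It is antibalanced if every odd cycle has negative sign and every even cycle positive sign (sign of a cycle = product of signs of its edges). The induced signed graph of a real symmetric $n\times n$ matrix $M$ has vertices $x_1,\dots,x_n$, edge $\{x_i,x_j\}$ iff $i\neq j$ and $M_{ij}\ne0$, with sign $-M_{ij}/|M_{ij}|$; $M$ is compatible with $\Gamma$ if its induced signed graph is $\Gamma$. Eigenfunctions are nonzero eigenvectors, viewed as functions on $V$. A walk is $y_1,\dots,y_m$ ($m\ge2$) with consecutive vertices adjacent. For $f:V\to\mathbb R$, $\Omega=\{x:f(x)\ne0\}$. S-walk: $f(y_j)\sigma_{y_jy_{j+1}}f(y_{j+1})>0$ for all $j$. W-walk: for any two consecutive nonzeros $y_i,y_j$ ($i<j$, $f(y_l)=0$ for $i<l<j$), $f(y_i)\sigma_{y_iy_{i+1}}\cdots\sigma_{y_{j-1}y_j}f(y_j)>0$. $\mathfrak{S}(f)$ is the number of equivalence classes on $\Omega$ of the relation "$x=y$ or an S-walk connects $x$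 and $y$" (the strong nodal domains), and $\mathfrak{W}(f)$ is the number of classes of "$x=y$ or a W-walk connects $x$ and $y$" (the weak nodal domains). *)

theory Defs
  imports "HOL-Analysis.Analysis"
begin

text \<open>Signed graphs on the vertex set UNIV of a finite type 'n.
  E is the (symmetric, irreflexive) adjacency relation, sigma gives the sign (+1 or -1)
  of each edge, as a real number.\<close>

definition signed_graph :: "('n \<Rightarrow> 'n \<Rightarrow> bool) \<Rightarrow> ('n \<Rightarrow> 'n \<Rightarrow> real) \<Rightarrow> bool" where
  "signed_graph E \<sigma> \<longleftrightarrow>
     (\<forall>x. \<not> E x x) \<and> (\<forall>x y. E x y \<longrightarrow> E y x) \<and>
     (\<forall>x y. E x y \<longrightarrow> \<sigma> x y = \<sigma> y x \<and> (\<sigma> x y = 1 \<or> \<sigma> x y = -1))"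

definition is_walk :: "('n \<Rightarrow> 'n \<Rightarrow> bool) \<Rightarrow> 'n list \<Rightarrow> bool" where
  "is_walk E ys \<longleftrightarrow> length ys \<ge> 2 \<and> (\<forall>j. Suc j < length ys \<longrightarrow> E (ys!j) (ys!Suc j))"

definition connected_graph :: "('n \<Rightarrow> 'n \<Rightarrow> bool) \<Rightarrow> bool" where
  "connected_graph E \<longleftrightarrow>
     (\<forall>x y. x \<noteq> y \<longrightarrow> (\<exists>ys. is_walk E ys \<and> hd ys = x \<and> last ys = y))"

definition is_cycle :: "('n \<Rightarrow> 'n \<Rightarrow> bool) \<Rightarrow> 'n list \<Rightarrow> bool" where
  "is_cycle E cs \<longleftrightarrow> length cs \<ge> 3 \<and> distinct cs \<and>
     (\<forall>j. Suc j < length cs \<longrightarrow> E (cs!j) (cs!Suc j)) \<and> E (last cs) (hd cs)"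

definition cycle_sign :: "('n \<Rightarrow> 'n \<Rightarrow> real) \<Rightarrow> 'n list \<Rightarrow> real" where
  "cycle_sign \<sigma> cs =
     (\<Prod>j<length cs. \<sigma> (cs!j) (cs!((Suc j) mod length cs)))"

definition antibalanced :: "('n \<Rightarrow> 'n \<Rightarrow> bool) \<Rightarrow> ('n \<Rightarrow> 'n \<Rightarrow> real) \<Rightarrow> bool" where
  "antibalanced E \<sigma> \<longleftrightarrow>
     (\<forall>cs. is_cycle E cs \<longrightarrow>
        (odd (length cs) \<longrightarrow> cycle_sign \<sigma> cs < 0) \<and>
        (even (length cs) \<longrightarrow> cycle_sign \<sigma> cs > 0))"

definition compatible :: "real^'n^'n \<Rightarrow> ('n \<Rightarrow> 'n \<Rightarrow> bool) \<Rightarrow> ('n \<Rightarrow> 'n \<Rightarrow> real) \<Rightarrow> bool" where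
  "compatible M E \<sigma> \<longleftrightarrow>
     (\<forall>i j. E i j \<longleftrightarrow> (i \<noteq> j \<and> M$i$j \<noteq> 0)) \<and>
     (\<forall>i j. E i j \<longrightarrow> \<sigma> i j = - (M$i$j / \<bar>M$i$j\<bar>))"

definition is_eigenvalue :: "real^'n^'n \<Rightarrow> real \<Rightarrow> bool" where
  "is_eigenvalue M lam \<longleftrightarrow> (\<exists>v. v \<noteq> 0 \<and> M *v v = lam *\<^sub>R v)"

definition largest_eigenvalue :: "real^'n^'n \<Rightarrow> real \<Rightarrow> bool" where
  "largest_eigenvalue M lam \<longleftrightarrow> is_eigenvalue M lam \<and> (\<forall>mu. is_eigenvalue M mu \<longrightarrow> mu \<le> lam)"

definition is_eigenfunction :: "real^'n^'n \<Rightarrow> real \<Rightarrow> real^'n \<Rightarrow> bool" where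
  "is_eigenfunction M lam f \<longleftrightarrow> f \<noteq> 0 \<and> M *v f = lam *\<^sub>R f"

text \<open>Simple eigenvalue: for the (symmetric) matrices considered, multiplicity one,
  i.e. the eigenspace is one-dimensional.\<close>
definition simple_eigenvalue :: "real^'n^'n \<Rightarrow> real \<Rightarrow> bool" where
  "simple_eigenvalue M lam \<longleftrightarrow> dim {v. M *v v = lam *\<^sub>R v} = 1"

definition S_walk :: "('n \<Rightarrow> 'n \<Rightarrow> bool) \<Rightarrow> ('n \<Rightarrow> 'n \<Rightarrow> real) \<Rightarrow> real^'n \<Rightarrow> 'n list \<Rightarrow> bool" where
  "S_walk E \<sigma> f ys \<longleftrightarrow> is_walk E ys \<and>
     (\<forall>j. Suc j < length ys \<longrightarrow> f$(ys!j) * \<sigma> (ys!j) (ys!Suc j) * f$(ys!Suc j) > 0)"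

definition W_walk :: "('n \<Rightarrow> 'n \<Rightarrow> bool) \<Rightarrow> ('n \<Rightarrow> 'n \<Rightarrow> real) \<Rightarrow> real^'n \<Rightarrow> 'n list \<Rightarrow> bool" where
  "W_walk E \<sigma> f ys \<longleftrightarrow> is_walk E ys \<and>
     (\<forall>i j. i < j \<and> j < length ys \<and> f$(ys!i) \<noteq> 0 \<and> f$(ys!j) \<noteq> 0 \<and>
            (\<forall>l. i < l \<and> l < j \<longrightarrow> f$(ys!l) = 0) \<longrightarrow>
            f$(ys!i) * (\<Prod>k\<in>{i..<j}. \<sigma> (ys!k) (ys!Suc k)) * f$(ys!j) > 0)"

definition nonzero_set :: "real^'n \<Rightarrow> 'n set" where
  "nonzero_set f = {x. f$x \<noteq> 0}"

definition strong_rel :: "('n \<Rightarrow> 'n \<Rightarrow> bool) \<Rightarrow> ('n \<Rightarrow> 'n \<Rightarrow> real) \<Rightarrow> real^'n \<Rightarrow> ('n \<times> 'n) set" where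
  "strong_rel E \<sigma> f = {(x, y). x \<in> nonzero_set f \<and> y \<in> nonzero_set f \<and>
      (x = y \<or> (\<exists>ys. S_walk E \<sigma> f ys \<and> hd ys = x \<and> last ys = y))}"

definition weak_rel :: "('n \<Rightarrow> 'n \<Rightarrow> bool) \<Rightarrow> ('n \<Rightarrow> 'n \<Rightarrow> real) \<Rightarrow> real^'n \<Rightarrow> ('n \<times> 'n) set" where
  "weak_rel E \<sigma> f = {(x, y). x \<in> nonzero_set f \<and> y \<in> nonzero_set f \<and>
      (x = y \<or> (\<exists>ys. W_walk E \<sigma> f ys \<and> hd ys = x \<and> last ys = y))}"

definition strong_nodal_count :: "('n \<Rightarrow> 'n \<Rightarrow> bool) \<Rightarrow> ('n \<Rightarrow> 'n \<Rightarrow> real) \<Rightarrow> real^'n \<Rightarrow> nat" where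
  "strong_nodal_count E \<sigma> f = card (nonzero_set f // strong_rel E \<sigma> f)"

definition weak_nodal_count :: "('n \<Rightarrow> 'n \<Rightarrow> bool) \<Rightarrow> ('n \<Rightarrow> 'n \<Rightarrow> real) \<Rightarrow> real^'n \<Rightarrow> nat" where
  "weak_nodal_count E \<sigma> f = card (nonzero_set f // weak_rel E \<sigma> f)"

end

theory Submission
  imports Defs
begin

fun wk :: "('n \<Rightarrow> 'n \<Rightarrow> bool) \<Rightarrow> 'n list \<Rightarrow> bool" where
  "wk E (x # y # ys) = (E x y \<and> wk E (y # ys))"
| "wk E _ = True"

fun wp :: "('n \<Rightarrow> 'n \<Rightarrow> real) \<Rightarrow> 'n list \<Rightarrow> real" where
  "wp s (x # y # ys) = (- s x y) * wp s (y # ys)"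
| "wp s _ = 1"

lemma wk_append: "wk E (xs @ a # ys) \<longleftrightarrow> wk E (xs @ [a]) \<and> wk E (a # ys)"
proof (induction xs)
  case Nil then show ?case by (cases ys) auto
next
  case (Cons x xs) then show ?case by (cases xs) auto
qed

lemma wp_append: "wp s (xs @ a # ys) = wp s (xs @ [a]) * wp s (a # ys)"
proof (induction xs)
  case Nil then show ?case by (cases ys) auto
next
  case (Cons x xs) then show ?case by (cases xs) auto
qed

lemma wk_nth: "wk E ys \<longleftrightarrow> (\<forall>j. Suc j < length ys \<longrightarrow> E (ys!j) (ys!Suc j))"
proof (induction E ys rule: wk.induct)
  case (1 E x y ys)
  show ?case
  proof
    assume "wk E (x # y # ys)"
    then show "\<forall>j. Suc j < length (x # y # ys) \<longrightarrow> E ((x # y # ys) ! j) ((x # y # ys) ! Suc j)"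
      using 1 by (auto simp: nth_Cons split: nat.splits)
  next
    assume h: "\<forall>j. Suc j < length (x # y # ys) \<longrightarrow> E ((x # y # ys) ! j) ((x # y # ys) ! Suc j)"
    have "E x y" using h[rule_format, of 0] by simp
    moreover have "\<forall>j. Suc j < length (y # ys) \<longrightarrow> E ((y # ys) ! j) ((y # ys) ! Suc j)"
      using h by (metis Suc_less_eq length_Cons nth_Cons_Suc)
    ultimately show "wk E (x # y # ys)" using 1 by simp
  qed
qed auto

lemma wp_nth: "wp s ys = (\<Prod>j<length ys - 1. - s (ys!j) (ys!Suc j))"
proof (induction s ys rule: wp.induct)
  case (1 s x y ys)
  then show ?case by (simp add: prod.lessThan_Suc_shift del: prod.lessThan_Suc)
qed auto

lemma wp_pm:
  assumes "signed_graph E s" "wk E ys"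
  shows "wp s ys = 1 \<or> wp s ys = -1"
  using assms(2)
proof (induction ys)
  case (Cons x ys)
  show ?case
  proof (cases ys)
    case (Cons y ys')
    then have "E x y" "wk E ys" using Cons.prems by auto
    then have "wp s ys = 1 \<or> wp s ys = -1" "s x y = 1 \<or> s x y = -1"
      using Cons.IH assms(1) unfolding signed_graph_def by auto
    then show ?thesis using \<open>ys = y # ys'\<close> by auto
  qed simp
qed auto

lemma wk_rev:
  assumes "\<forall>x y. E x y \<longrightarrow> E y x"
  shows "wk E (rev ys) = wk E ys"
proof (induction ys rule: induct_list012)
  case (3 x y ys)
  have "rev (x # y # ys) = rev ys @ y # [x]" by simp
  then have "wk E (rev (x # y # ys)) = (wk E (rev (y#ys)) \<and> E y x)"
    using wk_append[of E "rev ys" y "[x]"] by simp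
  then show ?case using 3 assms by auto
qed auto

lemma wp_rev:
  assumes "signed_graph E s" "wk E ys"
  shows "wp s (rev ys) = wp s ys"
  using assms(2)
proof (induction ys rule: induct_list012)
  case (3 x y ys)
  have "rev (x # y # ys) = rev ys @ y # [x]" by simp
  then have "wp s (rev (x # y # ys)) = wp s (rev (y#ys)) * (- s y x)"
    using wp_append[of s "rev ys" y "[x]"] by simp
  then show ?case using 3 assms(1) unfolding signed_graph_def by auto
qed auto

lemma prod_neg_pow: "(\<Prod>j<k. - a j) = (-1::real)^k * (\<Prod>j<k. a j)"
proof -
  have "(\<Prod>j<k. - a j) = (\<Prod>j<k. (-1) * a j)" by simp
  also have "\<dots> = (\<Prod>j<k. (-1::real)) * (\<Prod>j<k. a j)" by (rule prod.distrib)
  finally show ?thesis by simp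
qed

lemma closed_walk:
  assumes sg: "signed_graph E s" and ab: "antibalanced E s"
  shows "length ws = n \<Longrightarrow> wk E ws \<Longrightarrow> ws \<noteq> [] \<Longrightarrow> hd ws = last ws \<Longrightarrow> wp s ws = 1"
proof (induction n arbitrary: ws rule: less_induct)
  case (less n)
  show ?case
  proof (cases "distinct (butlast ws)")
    case False
    then obtain A c B C' where dec: "butlast ws = A @ [c] @ B @ [c] @ C'"
      using not_distinct_decomp by blast
    define C where "C = C' @ [last ws]"
    have ws: "ws = A @ c # (B @ c # C)"
    proof -
      have "ws = butlast ws @ [last ws]" using less.prems(3) by simp
      also have "\<dots> = A @ c # (B @ c # C)" unfolding dec C_def by simp
      finally show ?thesis .
    qed
    have w1: "wk E (A @ [c])" "wk E (c # B @ [c])" "wk E (c # C)"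
    proof -
      have "wk E (A @ c # (B @ c # C))" using less.prems(2) ws by simp
      then show "wk E (A @ [c])" "wk E (c # B @ [c])" "wk E (c # C)"
        using wk_append[of E A c "B @ c # C"] wk_append[of E "c # B" c C] by simp_all
    qed
    have p: "wp s ws = wp s (A @ [c]) * wp s (c # B @ [c]) * wp s (c # C)"
      using ws wp_append[of s A c "B @ c # C"] wp_append[of s "c # B" c C] by simp
    have lws: "length ws = length A + length B + length C + 2"
      using arg_cong[OF ws, of length] by simp
    have "C \<noteq> []" unfolding C_def by simp
    then have "length C > 0" by simp
    have "wp s (c # B @ [c]) = 1"
      using less.IH[of "length (c # B @ [c])" "c # B @ [c]"] w1(2) lws \<open>length C > 0\<close> less.prems(1) by simp
    moreover have "wp s (A @ c # C) = 1"
    proof -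
      have "wk E (A @ c # C)" using w1(1,3) wk_append[of E A c C] by simp
      moreover have "hd (A @ c # C) = last (A @ c # C)"
      proof -
        have "last C = last ws" by (simp add: C_def)
        moreover have "hd ws = hd (A @ c # C)" using ws by (cases A) simp_all
        ultimately show ?thesis using less.prems(4) \<open>C \<noteq> []\<close> by simp
      qed
      ultimately show ?thesis
        using less.IH[of "length (A @ c # C)" "A @ c # C"] lws less.prems(1) by simp
    qed
    ultimately show ?thesis using p wp_append[of s A c C] by simp
  next
    case True
    define k where "k = length (butlast ws)"
    have lw: "length ws = Suc k" using less.prems(3) unfolding k_def by simp
    consider "k = 0" | "k = 1" | "k = 2" | "k \<ge> 3" by linarith
    then show ?thesis
    proof cases
      case 1 then show ?thesis using lw by (cases ws) auto
    next
      case 2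
      then obtain a b where "ws = [a, b]" using lw
        by (auto simp: length_Suc_conv)
      then show ?thesis using less.prems sg unfolding signed_graph_def by auto
    next
      case 3
      then obtain a b c where "ws = [a, b, c]" using lw
        by (auto simp: length_Suc_conv numeral_2_eq_2)
      then have "a = c" "E b c" using less.prems(2,4) by auto
      then have "s b c = 1 \<or> s b c = -1" "s c b = s b c" using sg unfolding signed_graph_def by auto
      then show ?thesis using \<open>ws = [a, b, c]\<close> \<open>a = c\<close> by auto
    next
      case 4
      define cs where "cs = butlast ws"
      have nth_cs: "\<And>j. j < k \<Longrightarrow> cs ! j = ws ! j" unfolding cs_def k_def by (simp add: nth_butlast)
      have hdl: "ws ! k = ws ! 0"
        using less.prems(3,4) lw by (simp add: last_conv_nth hd_conv_nth)
      have edges: "\<And>j. Suc j < length ws \<Longrightarrow> E (ws!j) (ws!Suc j)"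
        using less.prems(2) wk_nth by blast
      have kc: "length cs = k" unfolding cs_def k_def by simp
      have nxt: "\<And>j. j < k \<Longrightarrow> cs ! (Suc j mod k) = ws ! Suc j"
      proof -
        fix j assume "j < k"
        show "cs ! (Suc j mod k) = ws ! Suc j"
        proof (cases "Suc j < k")
          case True then show ?thesis using nth_cs by simp
        next
          case False
          then have "Suc j = k" using \<open>j < k\<close> by simp
          then show ?thesis using nth_cs hdl 4 by simp
        qed
      qed
      have cyc: "is_cycle E cs"
        unfolding is_cycle_def
      proof (intro conjI allI impI)
        show "3 \<le> length cs" using kc 4 by simp
        show "distinct cs" using True cs_def by simp
        fix j assume "Suc j < length cs"
        then show "E (cs ! j) (cs ! Suc j)" using nth_cs edges kc lw by simp
      next
        have "cs \<noteq> []" using kc 4 by auto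
        then have "last cs = cs ! (k - 1)" using kc by (simp add: last_conv_nth)
        then have "last cs = ws ! (k - 1)" using nth_cs[of "k - 1"] 4 by simp
        moreover have "hd cs = ws ! k" using nth_cs[of 0] \<open>cs \<noteq> []\<close> 4 hdl by (simp add: hd_conv_nth)
        ultimately show "E (last cs) (hd cs)" using edges[of "k-1"] 4 lw by simp
      qed
      have "cycle_sign s cs = (\<Prod>j<k. s (ws!j) (ws!Suc j))"
        unfolding cycle_sign_def kc using nth_cs nxt by (intro prod.cong) auto
      moreover have "wp s ws = (\<Prod>j<k. - s (ws!j) (ws!Suc j))"
        using wp_nth[of s ws] lw by simp
      ultimately have eq: "wp s ws = (-1)^k * cycle_sign s cs" by (simp add: prod_neg_pow)
      have pm: "wp s ws = 1 \<or> wp s ws = -1" using wp_pm[OF sg less.prems(2)] .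
      show ?thesis
      proof (cases "odd k")
        case True
        then have "cycle_sign s cs < 0" using ab cyc kc unfolding antibalanced_def by auto
        then show ?thesis using eq pm True by auto
      next
        case False
        then have "cycle_sign s cs > 0" using ab cyc kc unfolding antibalanced_def by auto
        then show ?thesis using eq pm False by auto
      qed
    qed
  qed
qed

lemma walk_exists:
  assumes "connected_graph E"
  shows "\<exists>p. wk E p \<and> p \<noteq> [] \<and> hd p = r \<and> last p = x"
proof (cases "x = r")
  case True then show ?thesis by (intro exI[of _ "[r]"]) simp
next
  case False
  then obtain ys where "is_walk E ys" "hd ys = r" "last ys = x"
    using assms unfolding connected_graph_def by metis
  then show ?thesis unfolding is_walk_def using wk_nth[of E ys] by (intro exI[of _ ys]) auto
qed

lemma switching:
  assumes sg: "signed_graph E s" and con: "connected_graph E" and ab: "antibalanced E s"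
  shows "\<exists>t. (\<forall>x. t x = 1 \<or> t x = -1) \<and> (\<forall>x y. E x y \<longrightarrow> s x y = - t x * t y)"
proof -
  obtain r :: 'a where True by blast
  define P where "P x = (SOME p. wk E p \<and> p \<noteq> [] \<and> hd p = r \<and> last p = x)" for x
  have P: "wk E (P x) \<and> P x \<noteq> [] \<and> hd (P x) = r \<and> last (P x) = x" for x
    unfolding P_def by (rule someI_ex) (rule walk_exists[OF con])
  define t where "t x = wp s (P x)" for x
  have tpm: "t x = 1 \<or> t x = -1" for x unfolding t_def using wp_pm[OF sg] P by blast
  have symE: "\<forall>x y. E x y \<longrightarrow> E y x" using sg unfolding signed_graph_def by blast
  have "s x y = - t x * t y" if "E x y" for x y
  proof -
    obtain Ax where Ax: "P x = Ax @ [x]" using P[of x] by (metis append_butlast_last_id)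
    obtain Ay where Ay: "P y = Ay @ [y]" using P[of y] by (metis append_butlast_last_id)
    define W where "W = Ax @ x # (y # rev Ay)"
    have rv: "rev (P y) = y # rev Ay" using Ay by simp
    have "wk E W" unfolding W_def using wk_append[of E Ax x "y # rev Ay"] P[of x] Ax
        wk_rev[OF symE, of "P y"] P[of y] rv \<open>E x y\<close> by auto
    moreover have "W \<noteq> []" unfolding W_def by simp
    moreover have "hd W = last W"
    proof -
      have "hd W = hd (P x)" unfolding W_def Ax by (cases Ax) auto
      moreover have "last W = last (rev (P y))" unfolding W_def rv by simp
      ultimately show ?thesis using P[of x] P[of y] by (simp add: last_rev)
    qed
    ultimately have "wp s W = 1" using closed_walk[OF sg ab] by blast
    moreover have "wp s W = t x * (- s x y) * t y"
      unfolding W_def t_def using wp_append[of s Ax x "y # rev Ay"] Ax rv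
        wp_rev[OF sg, of "P y"] P[of y] by simp
    ultimately show ?thesis using tpm[of x] tpm[of y] by auto
  qed
  then show ?thesis using tpm by blast
qed


lemma quad_sym:
  fixes M :: "real^'n^'n"
  assumes "transpose M = M"
  shows "x \<bullet> (M *v y) = y \<bullet> (M *v x)"
proof -
  have "x \<bullet> (M *v y) = (x v* M) \<bullet> y" by (simp add: dot_lmul_matrix)
  also have "x v* M = M *v x" using transpose_matrix_vector[of M x] assms by simp
  finally show ?thesis by (simp add: inner_commute)
qed

lemma max_eigen:
  fixes M :: "real^'n^'n"
  assumes sym: "transpose M = M"
    and le: "\<And>x. x \<bullet> (M *v x) \<le> mu * (x \<bullet> x)"
    and eq: "u \<bullet> (M *v u) = mu * (u \<bullet> u)"
  shows "M *v u = mu *\<^sub>R u"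
proof -
  define w where "w = M *v u - mu *\<^sub>R u"
  define a where "a = w \<bullet> w"
  define c where "c = w \<bullet> (M *v w) - mu * (w \<bullet> w)"
  have c0: "c \<le> 0" using le[of w] unfolding c_def by simp
  have a0: "a \<ge> 0" unfolding a_def by simp
  have expand: "(u + t *\<^sub>R w) \<bullet> (M *v (u + t *\<^sub>R w)) - mu * ((u + t *\<^sub>R w) \<bullet> (u + t *\<^sub>R w))
      = 2 * t * a + t^2 * c" for t
  proof -
    have s1: "u \<bullet> (M *v w) = w \<bullet> (M *v u)" by (rule quad_sym[OF sym])
    have s2: "a = w \<bullet> (M *v u) - mu * (w \<bullet> u)" unfolding a_def
      by (subst (2) w_def) (simp add: inner_diff_right)
    show ?thesis
      unfolding c_def s2
      using eq s1
      by (simp add: inner_add_left inner_add_right matrix_vector_right_distrib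
          matrix_vector_mult_scaleR algebra_simps power2_eq_square inner_commute[of w u])
  qed
  have "a = 0"
  proof (rule ccontr)
    assume "a \<noteq> 0"
    then have ap: "a > 0" using a0 by simp
    define t where "t = a / (1 - c)"
    have tp: "t > 0" unfolding t_def using ap c0 by simp
    have "2 * t * a + t^2 * c \<le> 0" using le[of "u + t *\<^sub>R w"] expand[of t] by simp
    moreover have "2 * t * a + t^2 * c > 0"
    proof -
      have c1: "1 - c > 0" using c0 by simp
      have "2 * a + t * c = a * (2 - c) / (1 - c)"
        unfolding t_def using c1 by (simp add: field_simps)
      moreover have "a * (2 - c) / (1 - c) > 0" using ap c0 c1 by simp
      moreover have "2 * t * a + t^2 * c = t * (2 * a + t * c)" by (simp add: power2_eq_square algebra_simps)
      ultimately show ?thesis using tp by (metis mult_pos_pos)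
    qed
    ultimately show False by simp
  qed
  then have "w = 0" unfolding a_def by simp
  then show ?thesis unfolding w_def by simp
qed

lemma rayleigh:
  fixes M :: "real^'n^'n"
  assumes sym: "transpose M = M" and lg: "largest_eigenvalue M lam"
  shows "x \<bullet> (M *v x) \<le> lam * (x \<bullet> x)"
proof -
  have "compact (sphere (0::real^'n) 1)" by simp
  moreover have "sphere (0::real^'n) 1 \<noteq> {}" by simp
  moreover have "continuous_on (sphere 0 1) (\<lambda>x::real^'n. x \<bullet> (M *v x))"
    by (intro continuous_intros)
  ultimately obtain u where u: "u \<in> sphere 0 1" and umax: "\<forall>y\<in>sphere 0 1. y \<bullet> (M *v y) \<le> u \<bullet> (M *v u)"
    using continuous_attains_sup by blast
  define mu where "mu = u \<bullet> (M *v u)"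
  have uu: "u \<bullet> u = 1" using u by (simp add: dot_square_norm)
  have le: "y \<bullet> (M *v y) \<le> mu * (y \<bullet> y)" for y
  proof (cases "y = 0")
    case True then show ?thesis by simp
  next
    case False
    define z where "z = (1 / norm y) *\<^sub>R y"
    have "z \<in> sphere 0 1" unfolding z_def using False by simp
    then have "z \<bullet> (M *v z) \<le> mu" using umax unfolding mu_def by blast
    moreover have "z \<bullet> (M *v z) = (y \<bullet> (M *v y)) / (y \<bullet> y)"
      unfolding z_def using False
      by (simp add: matrix_vector_mult_scaleR dot_square_norm power2_eq_square)
    moreover have "y \<bullet> y > 0" using False by simp
    ultimately show ?thesis by (simp add: divide_le_eq mult.commute)
  qed
  have "M *v u = mu *\<^sub>R u" by (rule max_eigen[OF sym le]) (simp add: uu mu_def)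
  moreover have "u \<noteq> 0" using u by auto
  ultimately have "is_eigenvalue M mu" unfolding is_eigenvalue_def by blast
  then have "mu \<le> lam" using lg unfolding largest_eigenvalue_def by blast
  moreover have "x \<bullet> x \<ge> 0" by simp
  ultimately show ?thesis using le[of x] by (meson mult_right_mono order_trans)
qed


lemma quad_sum:
  fixes M :: "real^'n^'n"
  shows "x \<bullet> (M *v x) = (\<Sum>i\<in>UNIV. \<Sum>j\<in>UNIV. x$i * M$i$j * x$j)"
  by (simp add: inner_vec_def matrix_vector_mult_def sum_distrib_left mult.assoc)

lemma walk_prop:
  assumes "wk E p" "p \<noteq> []" "P (hd p)" "\<And>a b. E a b \<Longrightarrow> P a \<Longrightarrow> P b"
  shows "P (last p)"
  using assms(1-3)
proof (induction p rule: induct_list012)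
  case (3 x y ys)
  then show ?case using assms(4) by auto
qed auto

lemma eigen_props:
  fixes M :: "real^'n^'n" and v :: "real^'n"
  assumes sg: "signed_graph E \<sigma>" and con: "connected_graph E"
    and sym: "transpose M = M" and comp: "compatible M E \<sigma>"
    and lg: "largest_eigenvalue M lam" and ev: "is_eigenfunction M lam v"
    and tpm: "\<forall>x. t x = 1 \<or> t x = -1" and tsw: "\<forall>x y. E x y \<longrightarrow> \<sigma> x y = - t x * t y"
  shows "(\<forall>x. v$x \<noteq> 0) \<and> (\<forall>x y. E x y \<longrightarrow> v$x * \<sigma> x y * v$y < 0)"
proof -
  define N where "N i j = t i * t j * M$i$j" for i j
  have t2: "t i * t i = 1" for i using tpm[rule_format, of i] by auto
  have NE: "E i j \<Longrightarrow> N i j = \<bar>M$i$j\<bar>" for i j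
  proof -
    assume "E i j"
    then have "M$i$j \<noteq> 0" "\<sigma> i j = - (M$i$j / \<bar>M$i$j\<bar>)" using comp unfolding compatible_def by auto
    moreover have "\<sigma> i j = - t i * t j" using tsw \<open>E i j\<close> by blast
    ultimately have "t i * t j = M$i$j / \<bar>M$i$j\<bar>" by simp
    then show ?thesis unfolding N_def using \<open>M$i$j \<noteq> 0\<close>
      by (simp add: field_simps abs_mult_self_eq)
  qed
  have Nnn: "i \<noteq> j \<Longrightarrow> N i j \<ge> 0" for i j
  proof -
    assume "i \<noteq> j"
    show ?thesis
    proof (cases "E i j")
      case True then show ?thesis using NE by simp
    next
      case False
      then have "M$i$j = 0" using comp \<open>i \<noteq> j\<close> unfolding compatible_def by auto
      then show ?thesis unfolding N_def by simp
    qed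
  qed
  have Npos: "E i j \<Longrightarrow> N i j > 0" for i j
    using NE comp unfolding compatible_def by auto
  define h where "h = (\<chi> i. t i * \<bar>v$i\<bar>)"
  define T where "T i j = N i j * (\<bar>v$i\<bar> * \<bar>v$j\<bar> - t i * t j * v$i * v$j)" for i j
  have Tnn: "T i j \<ge> 0" for i j
  proof (cases "i = j")
    case True
    have "t i * t i * v$i * v$i = \<bar>v$i\<bar> * \<bar>v$i\<bar>" using t2[of i] by (simp add: abs_mult_self_eq)
    then have "\<bar>v$i\<bar> * \<bar>v$j\<bar> - t i * t j * v$i * v$j = 0" using True by simp
    then show ?thesis unfolding T_def by simp
  next
    case False
    have "t i * t j * v$i * v$j \<le> \<bar>t i * t j * v$i * v$j\<bar>" by simp
    also have "\<dots> = \<bar>v$i\<bar> * \<bar>v$j\<bar>"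
    proof -
      have "\<bar>t i\<bar> = 1" "\<bar>t j\<bar> = 1" using tpm[rule_format, of i] tpm[rule_format, of j] by auto
      then show ?thesis by (simp add: abs_mult)
    qed
    finally show ?thesis unfolding T_def using Nnn[OF False] by simp
  qed
  have vMv: "v \<bullet> (M *v v) = (\<Sum>i\<in>UNIV. \<Sum>j\<in>UNIV. (t i * t j * v$i * v$j) * N i j)"
    unfolding quad_sum N_def
  proof (intro sum.cong refl)
    fix i j
    have "v$i * M$i$j * v$j = (t i * t i) * (t j * t j) * (v$i * M$i$j * v$j)" using t2 by simp
    then show "v$i * M$i$j * v$j = t i * t j * v$i * v$j * (t i * t j * M$i$j)" by (simp add: ac_simps)
  qed
  have hMh: "h \<bullet> (M *v h) = (\<Sum>i\<in>UNIV. \<Sum>j\<in>UNIV. (\<bar>v$i\<bar> * \<bar>v$j\<bar>) * N i j)"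
    unfolding quad_sum N_def h_def by (simp add: ac_simps)
  have hh: "h \<bullet> h = v \<bullet> v"
    unfolding h_def inner_vec_def
  proof (intro sum.cong refl)
    fix i
    show "(\<chi> i. t i * \<bar>v$i\<bar>)$i \<bullet> (\<chi> i. t i * \<bar>v$i\<bar>)$i = v$i \<bullet> v$i"
      using t2[of i] by (simp add: abs_mult_self_eq)
         (metis (no_types, lifting) abs_mult_self_eq mult.commute mult.left_commute mult_1)
  qed
  have diff: "h \<bullet> (M *v h) - v \<bullet> (M *v v) = (\<Sum>i\<in>UNIV. \<Sum>j\<in>UNIV. T i j)"
    unfolding hMh vMv T_def by (simp add: sum_subtractf[symmetric] algebra_simps)
  have vev: "v \<bullet> (M *v v) = lam * (v \<bullet> v)" using ev unfolding is_eigenfunction_def by simp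
  have hle: "h \<bullet> (M *v h) \<le> lam * (h \<bullet> h)" by (rule rayleigh[OF sym lg])
  have sumT: "(\<Sum>i\<in>UNIV. \<Sum>j\<in>UNIV. T i j) = 0"
    using diff vev hle hh Tnn by (smt (verit) sum_nonneg)
  have T0: "T i j = 0" for i j
  proof -
    have "\<forall>i\<in>UNIV. (\<Sum>j\<in>UNIV. T i j) = 0"
      using sumT by (subst sum_nonneg_eq_0_iff[symmetric]) (auto intro: sum_nonneg Tnn)
    then have "(\<Sum>j\<in>UNIV. T i j) = 0" by blast
    then show ?thesis using sum_nonneg_eq_0_iff[of UNIV "T i"] Tnn by auto
  qed
  have heig: "M *v h = lam *\<^sub>R h"
    by (rule max_eigen[OF sym]) (use rayleigh[OF sym lg] diff sumT vev hh in auto)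
  have closed: "v$y = 0" if "E x y" "v$x = 0" for x y
  proof -
    have "(M *v h)$x = 0" using heig \<open>v$x = 0\<close> unfolding h_def by simp
    then have "(\<Sum>j\<in>UNIV. M$x$j * (t j * \<bar>v$j\<bar>)) = 0"
      unfolding h_def by (simp add: matrix_vector_mult_def)
    then have "t x * (\<Sum>j\<in>UNIV. M$x$j * (t j * \<bar>v$j\<bar>)) = 0" by simp
    then have s0: "(\<Sum>j\<in>UNIV. N x j * \<bar>v$j\<bar>) = 0"
      unfolding N_def by (simp add: sum_distrib_left ac_simps)
    have "\<forall>j\<in>UNIV. N x j * \<bar>v$j\<bar> \<ge> 0"
    proof
      fix j show "N x j * \<bar>v$j\<bar> \<ge> 0"
        using Nnn[of x j] \<open>v$x = 0\<close> by (cases "x = j") auto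
    qed
    then have "N x y * \<bar>v$y\<bar> = 0" using s0 sum_nonneg_eq_0_iff[of UNIV "\<lambda>j. N x j * \<bar>v$j\<bar>"] by auto
    then show ?thesis using Npos[OF \<open>E x y\<close>] by simp
  qed
  have nz: "\<forall>x. v$x \<noteq> 0"
  proof (rule ccontr)
    assume "\<not> (\<forall>x. v$x \<noteq> 0)"
    then obtain x0 where x0: "v$x0 = 0" by blast
    have "v$y = 0" for y
    proof -
      obtain p where "wk E p" "p \<noteq> []" "hd p = x0" "last p = y" using walk_exists[OF con] by blast
      then show ?thesis using walk_prop[of E p "\<lambda>z. v$z = 0"] x0 closed by auto
    qed
    then have "v = 0" by (simp add: vec_eq_iff)
    then show False using ev unfolding is_eigenfunction_def by simp
  qed
  have "v$x * \<sigma> x y * v$y < 0" if "E x y" for x y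
  proof -
    have "\<bar>v$x\<bar> * \<bar>v$y\<bar> = t x * t y * v$x * v$y"
      using T0[of x y] Npos[OF that] unfolding T_def by simp
    moreover have "\<bar>v$x\<bar> * \<bar>v$y\<bar> > 0" using nz by simp
    moreover have "v$x * \<sigma> x y * v$y = - (t x * t y * v$x * v$y)" using tsw that by simp
    ultimately show ?thesis by linarith
  qed
  then show ?thesis using nz by blast
qed


lemma prod_rot:
  assumes "k > 0"
  shows "(\<Prod>j<k. g (Suc j mod k)) = (\<Prod>j<k. (g j :: real))"
proof -
  obtain m where k: "k = Suc m" using assms by (cases k) auto
  have "(\<Prod>j<Suc m. g (Suc j mod Suc m)) = (\<Prod>j<m. g (Suc j mod Suc m)) * g 0"
    by simp
  also have "(\<Prod>j<m. g (Suc j mod Suc m)) = (\<Prod>j<m. g (Suc j))"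
    by (intro prod.cong) auto
  also have "(\<Prod>j<m. g (Suc j)) * g 0 = (\<Prod>j<Suc m. g j)"
    by (simp add: prod.lessThan_Suc_shift del: prod.lessThan_Suc)
  finally show ?thesis using k by simp
qed

lemma sign_to_antibalanced:
  assumes sw: "\<forall>x y. E x y \<longrightarrow> \<sigma> x y = - s x * s y" and spm: "\<forall>x. s x * s x = (1::real)"
  shows "antibalanced E \<sigma>"
  unfolding antibalanced_def
proof (intro allI impI)
  fix cs assume cyc: "is_cycle E cs"
  define k where "k = length cs"
  have k3: "k \<ge> 3" using cyc unfolding is_cycle_def k_def by simp
  have edge: "E (cs!j) (cs!(Suc j mod k))" if "j < k" for j
  proof (cases "Suc j < k")
    case True then show ?thesis using cyc unfolding is_cycle_def k_def by simp
  next
    case False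
    then have "Suc j = k" using that by simp
    moreover have "cs \<noteq> []" using k3 k_def by auto
    moreover have "j = length cs - Suc 0" using \<open>Suc j = k\<close> k_def by simp
    ultimately show ?thesis using cyc unfolding is_cycle_def k_def
      by (simp add: last_conv_nth hd_conv_nth)
  qed
  have "cycle_sign \<sigma> cs = (\<Prod>j<k. - s (cs!j) * s (cs!(Suc j mod k)))"
    unfolding cycle_sign_def k_def[symmetric] using edge sw by (intro prod.cong) auto
  also have "\<dots> = (-1)^k * ((\<Prod>j<k. s (cs!j)) * (\<Prod>j<k. s (cs!(Suc j mod k))))"
    using prod_neg_pow[of "\<lambda>j. s (cs!j) * s (cs!(Suc j mod k))" k] by (simp add: prod.distrib)
  also have "(\<Prod>j<k. s (cs!(Suc j mod k))) = (\<Prod>j<k. s (cs!j))"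
    using prod_rot[of k "\<lambda>j. s (cs!j)"] k3 by simp
  also have "(\<Prod>j<k. s (cs!j)) * (\<Prod>j<k. s (cs!j)) = 1"
    using spm by (simp add: prod.distrib[symmetric])
  finally have cs: "cycle_sign \<sigma> cs = (-1)^k" by simp
  show "(odd (length cs) \<longrightarrow> cycle_sign \<sigma> cs < 0) \<and> (even (length cs) \<longrightarrow> 0 < cycle_sign \<sigma> cs)"
    using cs k_def by simp
qed

lemma S_walk_pair:
  assumes "E a b" "f$a * \<sigma> a b * f$b > 0"
  shows "S_walk E \<sigma> f [a, b]"
  using assms unfolding S_walk_def is_walk_def by (auto simp: less_Suc_eq)

lemma S_walk_cons:
  assumes "S_walk E \<sigma> f ys" "E a (hd ys)" "f$a * \<sigma> a (hd ys) * f$(hd ys) > 0"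
  shows "S_walk E \<sigma> f (a # ys) \<and> hd (a # ys) = a \<and> last (a # ys) = last ys"
proof -
  have ne: "ys \<noteq> []" using assms(1) unfolding S_walk_def is_walk_def by auto
  then have h0: "ys ! 0 = hd ys" by (simp add: hd_conv_nth)
  have "S_walk E \<sigma> f (a # ys)"
    unfolding S_walk_def is_walk_def
  proof (intro conjI allI impI)
    show "2 \<le> length (a # ys)" using assms(1) unfolding S_walk_def is_walk_def by simp
  next
    fix j assume j: "Suc j < length (a # ys)"
    show "E ((a # ys) ! j) ((a # ys) ! Suc j)"
    proof (cases j)
      case 0 then show ?thesis using assms(2) h0 by simp
    next
      case (Suc j') then show ?thesis using assms(1) j unfolding S_walk_def is_walk_def by simp
    qed
  next
    fix j assume j: "Suc j < length (a # ys)"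
    show "0 < f $ ((a # ys) ! j) * \<sigma> ((a # ys) ! j) ((a # ys) ! Suc j) * f $ ((a # ys) ! Suc j)"
    proof (cases j)
      case 0 then show ?thesis using assms(3) h0 by simp
    next
      case (Suc j') then show ?thesis using assms(1) j unfolding S_walk_def is_walk_def by simp
    qed
  qed
  then show ?thesis using ne by simp
qed

lemma quotient_image: "A // r = (\<lambda>x. r `` {x}) ` A"
  unfolding quotient_def by auto


lemma forward:
  fixes E :: "'n::finite \<Rightarrow> 'n \<Rightarrow> bool" and M :: "real^'n^'n"
  assumes sg: "signed_graph E \<sigma>" and con: "connected_graph E"
    and sym: "transpose M = M" and comp: "compatible M E \<sigma>"
    and lg: "largest_eigenvalue M lam" and ev: "is_eigenfunction M lam f"
    and ab: "antibalanced E \<sigma>"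
  shows "weak_nodal_count E \<sigma> f = CARD('n) \<and> strong_nodal_count E \<sigma> f = CARD('n)
     \<and> simple_eigenvalue M lam"
proof -
  obtain t where tpm: "\<forall>x. t x = 1 \<or> t x = -1" and tsw: "\<forall>x y. E x y \<longrightarrow> \<sigma> x y = - t x * t y"
    using switching[OF sg con ab] by blast
  note EP = eigen_props[OF sg con sym comp lg _ tpm tsw]
  have nz: "\<forall>x. f$x \<noteq> 0" and neg: "\<forall>x y. E x y \<longrightarrow> f$x * \<sigma> x y * f$y < 0"
    using EP[OF ev] by auto
  have Om: "nonzero_set f = UNIV" using nz unfolding nonzero_set_def by auto
  have noS: "\<not> S_walk E \<sigma> f ys" for ys
  proof
    assume "S_walk E \<sigma> f ys"
    then have "is_walk E ys" "0 < f$(ys!0) * \<sigma> (ys!0) (ys!Suc 0) * f$(ys!Suc 0)"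
      unfolding S_walk_def is_walk_def by auto
    moreover have "E (ys!0) (ys!Suc 0)" using \<open>is_walk E ys\<close> unfolding is_walk_def by auto
    ultimately show False using neg[rule_format, of "ys!0" "ys!Suc 0"] by simp
  qed
  have noW: "\<not> W_walk E \<sigma> f ys" for ys
  proof
    assume W: "W_walk E \<sigma> f ys"
    then have iw: "is_walk E ys" unfolding W_walk_def by auto
    then have l2: "1 < length ys" unfolding is_walk_def by auto
    have "E (ys!0) (ys!Suc 0)" using iw unfolding is_walk_def by auto
    moreover have "0 < f$(ys!0) * (\<Prod>k\<in>{0..<1}. \<sigma> (ys!k) (ys!Suc k)) * f$(ys!1)"
      using W[unfolded W_walk_def, THEN conjunct2, rule_format, of 0 1] nz l2 by auto
    ultimately show False using neg[rule_format, of "ys!0" "ys!Suc 0"] by simp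
  qed
  have SR: "strong_rel E \<sigma> f = Id" unfolding strong_rel_def Om using noS by auto
  have WR: "weak_rel E \<sigma> f = Id" unfolding weak_rel_def Om using noW by auto
  have cq: "card (UNIV // (Id :: ('n \<times> 'n) set)) = CARD('n)"
  proof -
    have "UNIV // (Id :: ('n \<times> 'n) set) = (\<lambda>x. {x}) ` UNIV" unfolding quotient_image by auto
    moreover have "inj (\<lambda>x::'n. {x})" by (auto simp: inj_on_def)
    ultimately show ?thesis by (simp add: card_image)
  qed
  have counts: "weak_nodal_count E \<sigma> f = CARD('n) \<and> strong_nodal_count E \<sigma> f = CARD('n)"
    unfolding weak_nodal_count_def strong_nodal_count_def SR WR Om cq by simp
  define S where "S = {v. M *v v = lam *\<^sub>R v}"
  have subS: "subspace S" unfolding subspace_def S_def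
    by (simp add: matrix_vector_right_distrib matrix_vector_mult_scaleR scaleR_add_right)
  have fS: "f \<in> S" using ev unfolding S_def is_eigenfunction_def by simp
  have f0: "f \<noteq> 0" using ev unfolding is_eigenfunction_def by simp
  have "S \<subseteq> span {f}"
  proof
    fix v assume vS: "v \<in> S"
    obtain x0 :: 'n where True by blast
    define w where "w = v - (v$x0 / f$x0) *\<^sub>R f"
    have wS: "w \<in> S" unfolding w_def using subS vS fS
      by (simp add: subspace_diff subspace_scale)
    have "w$x0 = 0" unfolding w_def using nz by simp
    have "w = 0"
    proof (rule ccontr)
      assume "w \<noteq> 0"
      then have "is_eigenfunction M lam w" using wS unfolding S_def is_eigenfunction_def by simp
      then have "\<forall>x. w$x \<noteq> 0" using EP by blast
      then show False using \<open>w$x0 = 0\<close> by blast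
    qed
    then have "v = (v$x0 / f$x0) *\<^sub>R f" unfolding w_def by simp
    then show "v \<in> span {f}" by (metis span_base span_scale singletonI)
  qed
  moreover have "span {f} \<subseteq> S" using subS fS by (simp add: span_minimal)
  ultimately have "S = span {f}" by blast
  then have "dim S = 1" using f0 by simp
  then show ?thesis using counts unfolding simple_eigenvalue_def S_def by simp
qed

lemma backward:
  fixes E :: "'n::finite \<Rightarrow> 'n \<Rightarrow> bool"
  assumes sg: "signed_graph E \<sigma>"
    and cnt: "strong_nodal_count E \<sigma> f = CARD('n)"
  shows "antibalanced E \<sigma>"
proof -
  define R where "R = strong_rel E \<sigma> f"
  define g where "g x = R `` {x}" for x
  have q: "nonzero_set f // R = g ` nonzero_set f" unfolding quotient_image g_def by simp
  have "card (g ` nonzero_set f) = CARD('n)" using cnt q unfolding strong_nodal_count_def R_def by simp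
  then have "CARD('n) \<le> card (nonzero_set f)" using card_image_le[of "nonzero_set f" g] by simp
  then have Om: "nonzero_set f = UNIV" by (intro card_seteq) simp_all
  then have nz: "f$x \<noteq> 0" for x unfolding nonzero_set_def by auto
  have "card (g ` UNIV) = card (UNIV :: 'n set)" using cnt q Om unfolding strong_nodal_count_def R_def by simp
  then have inj: "inj g" by (intro eq_card_imp_inj_on) simp_all
  have neg: "f$x * \<sigma> x y * f$y < 0" if "E x y" for x y
  proof (rule ccontr)
    assume "\<not> f$x * \<sigma> x y * f$y < 0"
    moreover have "\<sigma> x y \<noteq> 0"
    proof -
      have "\<sigma> x y = 1 \<or> \<sigma> x y = -1" using sg that unfolding signed_graph_def by blast
      then show ?thesis by auto
    qed
    moreover have "f$x * \<sigma> x y * f$y \<noteq> 0" using nz[of x] nz[of y] \<open>\<sigma> x y \<noteq> 0\<close> by simp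
    ultimately have pos: "f$x * \<sigma> x y * f$y > 0" by linarith
    have Eyx: "E y x" using sg that unfolding signed_graph_def by auto
    have pos': "f$y * \<sigma> y x * f$x > 0" using pos sg that unfolding signed_graph_def by (simp add: ac_simps)
    have sub: "g a \<subseteq> g b" if "E b a" "f$b * \<sigma> b a * f$a > 0" for a b
    proof
      fix z assume "z \<in> g a"
      then have "a = z \<or> (\<exists>ys. S_walk E \<sigma> f ys \<and> hd ys = a \<and> last ys = z)"
        unfolding g_def R_def strong_rel_def by auto
      then have "\<exists>ys. S_walk E \<sigma> f ys \<and> hd ys = b \<and> last ys = z"
      proof
        assume "a = z" then show ?thesis using S_walk_pair[of E b a f \<sigma>, OF that] by (intro exI[of _ "[b, a]"]) simp
      next
        assume "\<exists>ys. S_walk E \<sigma> f ys \<and> hd ys = a \<and> last ys = z"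
        then obtain ys where "S_walk E \<sigma> f ys" "hd ys = a" "last ys = z" by blast
        then show ?thesis using S_walk_cons[of E \<sigma> f ys b] that by (intro exI[of _ "b # ys"]) auto
      qed
      then show "z \<in> g b" unfolding g_def R_def strong_rel_def using Om by auto
    qed
    have "g x = g y" using sub[OF that pos] sub[OF Eyx pos'] by blast
    moreover have "x \<noteq> y" using sg that unfolding signed_graph_def by auto
    ultimately show False using inj unfolding inj_def by blast
  qed
  define s where "s x = sgn (f$x)" for x
  have sw: "\<forall>x y. E x y \<longrightarrow> \<sigma> x y = - s x * s y"
  proof (intro allI impI)
    fix x y assume "E x y"
    then have "\<sigma> x y = 1 \<or> \<sigma> x y = -1" using sg unfolding signed_graph_def by auto
    moreover have "f$x * \<sigma> x y * f$y < 0" using neg \<open>E x y\<close> by blast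
    ultimately show "\<sigma> x y = - s x * s y"
    proof (elim disjE)
      assume h: "\<sigma> x y = 1" "f$x * \<sigma> x y * f$y < 0"
      then have "f$x * f$y < 0" by simp
      then show ?thesis using h(1) by (cases "f$x > 0") (auto simp: mult_less_0_iff s_def)
    next
      assume h: "\<sigma> x y = -1" "f$x * \<sigma> x y * f$y < 0"
      then have "f$x * f$y > 0" by simp
      then show ?thesis using h(1) by (cases "f$x > 0") (auto simp: zero_less_mult_iff s_def)
    qed
  qed
  have spm: "\<forall>x. s x * s x = 1" unfolding s_def using nz by (auto simp: sgn_if)
  show ?thesis by (rule sign_to_antibalanced[OF sw spm])
qed

theorem theorem3p4:
  fixes E :: "'n::finite \<Rightarrow> 'n \<Rightarrow> bool"
    and \<sigma> :: "'n \<Rightarrow> 'n \<Rightarrow> real"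
    and M :: "real^'n^'n"
    and lam :: real
    and f :: "real^'n"
  assumes "signed_graph E \<sigma>"
    and "connected_graph E"
    and "transpose M = M"
    and "compatible M E \<sigma>"
    and "largest_eigenvalue M lam"
    and "is_eigenfunction M lam f"
  shows "(antibalanced E \<sigma> \<longleftrightarrow>
            weak_nodal_count E \<sigma> f = CARD('n) \<and> strong_nodal_count E \<sigma> f = CARD('n))
         \<and> (antibalanced E \<sigma> \<longrightarrow> simple_eigenvalue M lam)"
  using forward[OF assms] backward[OF assms(1)] by blast

end
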